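(* Let $\mathcal M=(G,In,Out,Leak)$ be a strongly connected linear compartmental model with $n$ compartments, $In=\{j\}$ and $Out=\{i\}$. Write the input-output equation as $$y_i^{(n)}+c_{n-1}y_i^{(n-1)}+\dots+c_1y_i'+c_0y_i=(-1)^{i+j}\left(d_{n-1}u_j^{(n-1)}+\dots+d_1u_j'+d_0u_j\right).$$ The coefficients on the left-hand side that are non-constant (as polynomials in the parameters) are exactly $c_0,c_1,\dots,c_{n-1}$ if $Leak\ne\emptyset$, and $c_1,\dots,c_{n-1}$ if $Leak=\emptyset$. The coefficients on the right-hand side that are non-constant are exactly $d_0,d_1,\dots,d_{n-2}$ if $In=Out$, and $d_0,d_1,\dots,d_{n-L-1}$ if $In\ne Out$, where $L$ is the length of a shortest directed path in $G$ from $j$ to $i$.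
   Context: A linear compartmental model $\mathcal M=(G,In,Out,Leak)$ consists of a finite directed graph $G=(V_G,E_G)$ without multi-edges, compartments $V_G=\{1,\dots,n\}$, and subsets $In,Out,Leak\subseteq V_G$; edge $k\to \ell$ carries parameter $a_{\ell k}$ and each $\ell\in Leak$ carries $a_{0\ell}$, and the parameters are independent indeterminates. The compartmental matrix $A$ has $A_{\ell\ell}=-\sum_{k:\,\ell\to k\in E_G}a_{k\ell}$ (minus $a_{0\ell}$ if $\ell\in Leak$), $A_{\ell k}=a_{\ell k}$ if $k\to\ell\in E_G$, $0$ otherwise. With $B^{p,q}$ denoting removal of row $p$ and column $q$, the input-output equation is $\det(\partial I-A)y_i=(-1)^{i+j}\det((\partial I-A)^{j,i})u_j$, $\partial I$ the diagonal matrix of $d/dt$'s; its coefficients are polynomials in the parameters. *)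

theory Defs
  imports "HOL-Library.Poly_Mapping" "Jordan_Normal_Form.Char_Poly" "Jordan_Normal_Form.Determinant"
begin

text \<open>Multivariate polynomials with real coefficients in indeterminates indexed by
  pairs of naturals: the parameter a_{l k} is the indeterminate indexed (l,k);
  the leak parameter a_{0 l} is the indeterminate indexed (0,l).  Compartments are 1..n.\<close>

type_synonym mpoly = "((nat \<times> nat) \<Rightarrow>\<^sub>0 nat) \<Rightarrow>\<^sub>0 real"

definition mvar :: "nat \<times> nat \<Rightarrow> mpoly" where
  "mvar v = Poly_Mapping.single (Poly_Mapping.single v 1) 1"

definition mconst :: "real \<Rightarrow> mpoly" where
  "mconst c = Poly_Mapping.single 0 c"

definition is_constant_mpoly :: "mpoly \<Rightarrow> bool" where
  "is_constant_mpoly p \<longleftrightarrow> (\<exists>c. p = mconst c)"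

definition comp_entry :: "(nat \<times> nat) set \<Rightarrow> nat set \<Rightarrow> nat \<Rightarrow> nat \<Rightarrow> mpoly" where
  "comp_entry E Leak l k =
     (if l = k then
        - (\<Sum>m\<in>{m. (l, m) \<in> E}. mvar (m, l)) - (if l \<in> Leak then mvar (0, l) else 0)
      else if (k, l) \<in> E then mvar (l, k) else 0)"

definition comp_matrix :: "nat \<Rightarrow> (nat \<times> nat) set \<Rightarrow> nat set \<Rightarrow> mpoly mat" where
  "comp_matrix n E Leak = mat n n (\<lambda>(r, c). comp_entry E Leak (r + 1) (c + 1))"

text \<open>Left-hand side: det(\<partial>I - A) as a polynomial in \<partial>; c_k is its k-th coefficient.\<close>
definition lhs_coeff :: "nat \<Rightarrow> (nat \<times> nat) set \<Rightarrow> nat set \<Rightarrow> nat \<Rightarrow> mpoly" where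
  "lhs_coeff n E Leak k = coeff (det (char_poly_matrix (comp_matrix n E Leak))) k"

text \<open>Right-hand side: det((\<partial>I - A)^{j,i}) (row j and column i removed); d_k is its k-th coefficient.\<close>
definition rhs_coeff :: "nat \<Rightarrow> (nat \<times> nat) set \<Rightarrow> nat set \<Rightarrow> nat \<Rightarrow> nat \<Rightarrow> nat \<Rightarrow> mpoly" where
  "rhs_coeff n E Leak i j k =
     coeff (det (mat_delete (char_poly_matrix (comp_matrix n E Leak)) (j - 1) (i - 1))) k"

definition strongly_connected :: "nat \<Rightarrow> (nat \<times> nat) set \<Rightarrow> bool" where
  "strongly_connected n E \<longleftrightarrow> (\<forall>u\<in>{1..n}. \<forall>v\<in>{1..n}. (u, v) \<in> E\<^sup>*)"

definition dist_path :: "(nat \<times> nat) set \<Rightarrow> nat \<Rightarrow> nat \<Rightarrow> nat" where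
  "dist_path E u v = (LEAST m. (u, v) \<in> E ^^ m)"

end

theory Submission
  imports Defs
begin



definition chi :: "(nat \<times> nat \<Rightarrow> real) \<Rightarrow> ((nat \<times> nat) \<Rightarrow>\<^sub>0 nat) \<Rightarrow> real" where
  "chi \<alpha> m = (\<Prod>v\<in>Poly_Mapping.keys m. \<alpha> v ^ Poly_Mapping.lookup m v)"

definition ev :: "(nat \<times> nat \<Rightarrow> real) \<Rightarrow> mpoly \<Rightarrow> real" where
  "ev \<alpha> p = (\<Sum>m\<in>Poly_Mapping.keys p. Poly_Mapping.lookup p m * chi \<alpha> m)"

lemma chi_superset: "finite S \<Longrightarrow> Poly_Mapping.keys m \<subseteq> S \<Longrightarrow> chi \<alpha> m = (\<Prod>v\<in>S. \<alpha> v ^ Poly_Mapping.lookup m v)"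
  unfolding chi_def by (rule prod.mono_neutral_left) (auto simp: in_keys_iff)

lemma chi_add: "chi \<alpha> (a + b) = chi \<alpha> a * chi \<alpha> b"
proof -
  let ?S = "Poly_Mapping.keys a \<union> Poly_Mapping.keys b"
  have f: "finite ?S" by simp
  have "chi \<alpha> (a + b) = (\<Prod>v\<in>?S. \<alpha> v ^ Poly_Mapping.lookup (a+b) v)"
    by (rule chi_superset[OF f]) (rule keys_add)
  also have "\<dots> = (\<Prod>v\<in>?S. \<alpha> v ^ Poly_Mapping.lookup a v * \<alpha> v ^ Poly_Mapping.lookup b v)"
    by (simp add: lookup_add power_add)
  also have "\<dots> = chi \<alpha> a * chi \<alpha> b"
    by (simp add: prod.distrib chi_superset[OF f])
  finally show ?thesis .
qed

lemma chi_zero[simp]: "chi \<alpha> 0 = 1" unfolding chi_def by simp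

lemma ev_superset: "finite S \<Longrightarrow> Poly_Mapping.keys p \<subseteq> S \<Longrightarrow> ev \<alpha> p = (\<Sum>m\<in>S. Poly_Mapping.lookup p m * chi \<alpha> m)"
  unfolding ev_def by (rule sum.mono_neutral_left) (auto simp: in_keys_iff)

lemma ev_add: "ev \<alpha> (p + q) = ev \<alpha> p + ev \<alpha> q"
proof -
  let ?S = "Poly_Mapping.keys p \<union> Poly_Mapping.keys q"
  have f: "finite ?S" by simp
  have "ev \<alpha> (p + q) = (\<Sum>m\<in>?S. Poly_Mapping.lookup (p+q) m * chi \<alpha> m)"
    by (rule ev_superset[OF f]) (rule keys_add)
  also have "\<dots> = ev \<alpha> p + ev \<alpha> q"
    by (simp add: lookup_add distrib_right sum.distrib ev_superset[OF f])
  finally show ?thesis .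
qed

lemma ev_zero[simp]: "ev \<alpha> 0 = 0" unfolding ev_def by simp

lemma ev_single[simp]: "ev \<alpha> (Poly_Mapping.single m c) = c * chi \<alpha> m"
  unfolding ev_def by auto

lemma ev_sum: "ev \<alpha> (\<Sum>x\<in>A. f x) = (\<Sum>x\<in>A. ev \<alpha> (f x))"
  by (induction A rule: infinite_finite_induct) (auto simp: ev_add)

lemma poly_mapping_sum_single: "p = (\<Sum>m\<in>Poly_Mapping.keys p. Poly_Mapping.single m (Poly_Mapping.lookup p m))"
  by (rule poly_mapping_eqI) (simp add: lookup_sum lookup_single when_def in_keys_iff)

lemma ev_mult: "ev \<alpha> (p * q) = ev \<alpha> p * ev \<alpha> q"
proof -
  have "p * q = (\<Sum>a\<in>Poly_Mapping.keys p. Poly_Mapping.single a (Poly_Mapping.lookup p a)) * (\<Sum>b\<in>Poly_Mapping.keys q. Poly_Mapping.single b (Poly_Mapping.lookup q b))"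
    by (metis poly_mapping_sum_single)
  also have "\<dots> = (\<Sum>a\<in>Poly_Mapping.keys p. \<Sum>b\<in>Poly_Mapping.keys q. Poly_Mapping.single (a+b) (Poly_Mapping.lookup p a * Poly_Mapping.lookup q b))"
    by (simp add: sum_product mult_single)
  finally have "ev \<alpha> (p * q) = (\<Sum>a\<in>Poly_Mapping.keys p. \<Sum>b\<in>Poly_Mapping.keys q. (Poly_Mapping.lookup p a * chi \<alpha> a) * (Poly_Mapping.lookup q b * chi \<alpha> b))"
    by (simp add: ev_sum chi_add mult_ac)
  also have "\<dots> = ev \<alpha> p * ev \<alpha> q"
    unfolding ev_def by (simp add: sum_product)
  finally show ?thesis .
qed

lemma ev_one[simp]: "ev \<alpha> 1 = 1"
  by (metis chi_zero ev_single mult_1 single_one)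

lemma ev_hom: "comm_ring_hom (ev \<alpha>)"
  by unfold_locales (auto simp: ev_add ev_mult)

lemma ev_mconst[simp]: "ev \<alpha> (mconst c) = c"
  unfolding mconst_def by simp

lemma ev_mvar[simp]: "ev \<alpha> (mvar v) = \<alpha> v"
  unfolding mvar_def by (simp add: chi_def)





lemma det_unique_perm:
  fixes M :: "'a::comm_ring_1 mat" and f :: "nat \<Rightarrow> nat"
  assumes M: "M \<in> carrier_mat n n" and sig: "\<sigma> permutes {0..<n}"
    and cond: "\<And>r c. r < n \<Longrightarrow> c < n \<Longrightarrow> r \<noteq> \<sigma> c \<Longrightarrow> M $$ (r,c) \<noteq> 0 \<Longrightarrow> f r < f (\<sigma> c)"
  shows "det M = signof \<sigma> * (\<Prod>c = 0..<n. M $$ (\<sigma> c, c))"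
proof -
  let ?P = "{p. p permutes {0..<n}}"
  let ?q = "inv_into UNIV \<sigma>"
  have q: "?q permutes {0..<n}" using sig by (rule permutes_inv)
  have zero: "(\<Prod>r = 0..<n. M $$ (r, p r)) = 0" if p: "p permutes {0..<n}" and pq: "p \<noteq> ?q" for p
  proof (rule ccontr)
    assume nz: "(\<Prod>r = 0..<n. M $$ (r, p r)) \<noteq> 0"
    have ent: "M $$ (r, p r) \<noteq> 0" if rn: "r < n" for r
    proof
      assume "M $$ (r, p r) = 0"
      then have "\<exists>a\<in>{0..<n}. M $$ (a, p a) = 0" using rn by auto
      then show False using nz by (simp add: prod_zero)
    qed
    define s where "s = \<sigma> \<circ> p"
    have s: "s permutes {0..<n}" unfolding s_def by (rule permutes_compose[OF p sig])
    have le: "f r \<le> f (s r)" if "r \<in> {0..<n}" for r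
    proof (cases "r = s r")
      case True then show ?thesis by simp
    next
      case False
      have "p r < n" using permutes_in_image[OF p] that by auto
      then show ?thesis using cond[of r "p r"] that ent False unfolding s_def by auto
    qed
    have "s \<noteq> id"
    proof
      assume "s = id"
      have "p x = ?q x" for x
        using fun_cong[OF \<open>s = id\<close>, of x] permutes_inverses(2)[OF sig, of "p x"] unfolding s_def by simp
      then have "p = ?q" by auto
      with pq show False by simp
    qed
    then obtain r where rs: "s r \<noteq> r" by (metis eq_id_iff)
    then have rn: "r \<in> {0..<n}" using s by (meson permutes_not_in)
    have lt: "f r < f (s r)"
    proof -
      have "p r < n" using permutes_in_image[OF p] rn by auto
      then show ?thesis using cond[of r "p r"] rn ent rs unfolding s_def by auto
    qed
    have "(\<Sum>r\<in>{0..<n}. f r) < (\<Sum>r\<in>{0..<n}. f (s r))"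
      by (rule sum_strict_mono_ex1) (use le rn lt in auto)
    also have "\<dots> = (\<Sum>r\<in>{0..<n}. f r)"
      using sum.permute[OF s, of f] by (simp add: comp_def)
    finally show False by simp
  qed
  have "det M = (\<Sum>p\<in>?P. signof p * (\<Prod>r = 0..<n. M $$ (r, p r)))"
    by (rule det_def'[OF M])
  also have "\<dots> = signof ?q * (\<Prod>r = 0..<n. M $$ (r, ?q r)) + (\<Sum>p\<in>?P-{?q}. signof p * (\<Prod>r = 0..<n. M $$ (r, p r)))"
    by (rule sum.remove) (use q finite_permutations[of "{0..<n}"] in auto)
  also have "(\<Sum>p\<in>?P-{?q}. signof p * (\<Prod>r = 0..<n. M $$ (r, p r))) = 0"
    by (rule sum.neutral) (use zero in auto)
  also have "signof ?q = (signof \<sigma> :: 'a)"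
  proof -
    have "permutation \<sigma>" using sig permutation_permutes by blast
    then show ?thesis by (simp add: sign_inverse)
  qed
  also have "(\<Prod>r = 0..<n. M $$ (r, ?q r)) = (\<Prod>c = 0..<n. M $$ (\<sigma> c, ?q (\<sigma> c)))"
    using prod.permute[OF sig, of "\<lambda>r. M $$ (r, ?q r)"] by (simp add: comp_def)
  also have "\<dots> = (\<Prod>c = 0..<n. M $$ (\<sigma> c, c))"
    using sig by (simp add: permutes_inverses(2))
  finally show ?thesis by simp
qed

definition colrep :: "'a::comm_ring_1 mat \<Rightarrow> nat \<Rightarrow> nat \<Rightarrow> 'a mat" where
  "colrep M i0 j0 = mat (dim_row M) (dim_col M) (\<lambda>(r,c). if c = i0 then (if r = j0 then 1 else 0) else M $$ (r,c))"

lemma colrep_carrier[simp]: "M \<in> carrier_mat n n \<Longrightarrow> colrep M i0 j0 \<in> carrier_mat n n"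
  unfolding colrep_def by auto

lemma colrep_index: "M \<in> carrier_mat n n \<Longrightarrow> r < n \<Longrightarrow> c < n \<Longrightarrow>
  colrep M i0 j0 $$ (r,c) = (if c = i0 then (if r = j0 then 1 else 0) else M $$ (r,c))"
  unfolding colrep_def by auto

lemma laplace_colrep:
  fixes M :: "'a::comm_ring_1 mat"
  assumes M: "M \<in> carrier_mat n n" and i0: "i0 < n" and j0: "j0 < n"
  shows "det (mat_delete M j0 i0) = (-1)^(j0+i0) * det (colrep M i0 j0)"
proof -
  let ?C = "colrep M i0 j0"
  have C: "?C \<in> carrier_mat n n" using M by simp
  have "det ?C = (\<Sum>r<n. ?C $$ (r,i0) * cofactor ?C r i0)"
    by (rule laplace_expansion_column[OF C i0])
  also have "\<dots> = (\<Sum>r<n. if r = j0 then cofactor ?C r i0 else 0)"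
    by (rule sum.cong) (use M i0 in \<open>auto simp: colrep_index\<close>)
  also have "\<dots> = cofactor ?C j0 i0" using j0 by simp
  finally have d: "det ?C = cofactor ?C j0 i0" .
  have md: "mat_delete ?C j0 i0 = mat_delete M j0 i0"
    by (rule eq_matI) (use M i0 in \<open>auto simp: mat_delete_def colrep_def\<close>)
  have "det ?C = (-1)^(j0+i0) * det (mat_delete M j0 i0)" using d md unfolding cofactor_def by simp
  then have "(-1)^(j0+i0) * det ?C = ((-1)^(j0+i0) * (-1)^(j0+i0)) * det (mat_delete M j0 i0)"
    by (simp add: mult.assoc)
  also have "(-1)^(j0+i0) * (-1)^(j0+i0) = (1::'a)" by (simp flip: power_add)
  finally show ?thesis by simp
qed

lemma (in comm_ring_hom) colrep_hom: "M \<in> carrier_mat n n \<Longrightarrow> map_mat hom (colrep M i0 j0) = colrep (map_mat hom M) i0 j0"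
  by (rule eq_matI) (auto simp: colrep_def)




locale cm =
  fixes n :: nat and E :: "(nat \<times> nat) set" and Leak :: "nat set"
  assumes Ebox: "E \<subseteq> {1..n} \<times> {1..n}" and noloop: "\<forall>k. (k, k) \<notin> E"
    and Lbox: "Leak \<subseteq> {1..n}" and sc: "strongly_connected n E"
begin

abbreviation "AA \<equiv> comp_matrix n E Leak"
abbreviation "dd u v \<equiv> dist_path E u v"

lemma A_carrier[simp]: "AA \<in> carrier_mat n n" by (simp add: comp_matrix_def)

lemma A_index: "r < n \<Longrightarrow> c < n \<Longrightarrow> AA $$ (r,c) = comp_entry E Leak (r+1) (c+1)"
  by (simp add: comp_matrix_def)

lemma E_box: "(a,b) \<in> E \<Longrightarrow> a \<in> {1..n} \<and> b \<in> {1..n}" using Ebox by auto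

lemma finite_E_succ: "finite {m. (l, m) \<in> E}"
  by (rule finite_subset[of _ "{1..n}"]) (use Ebox in auto)

lemma reach: assumes "u \<in> {1..n}" "v \<in> {1..n}" shows "(u,v) \<in> E ^^ (dd u v)"
proof -
  have "(u,v) \<in> E\<^sup>*" using sc assms unfolding strongly_connected_def by auto
  then obtain m where "(u,v) \<in> E ^^ m" using rtrancl_power by blast
  then show ?thesis unfolding dist_path_def by (rule LeastI)
qed

lemma dist_le: "(u,v) \<in> E ^^ m \<Longrightarrow> dd u v \<le> m"
  unfolding dist_path_def by (rule Least_le)

lemma dist_self[simp]: "dd v v = 0"
  using dist_le[of v v 0] by simp

lemma dist_0: "u \<in> {1..n} \<Longrightarrow> v \<in> {1..n} \<Longrightarrow> dd u v = 0 \<Longrightarrow> u = v"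
  using reach[of u v] by simp

definition par :: "nat \<Rightarrow> nat \<Rightarrow> nat" where
  "par \<rho> w = (SOME y. (w,y) \<in> E \<and> (y,\<rho>) \<in> E ^^ (dd w \<rho> - 1))"

lemma par: assumes w: "w \<in> {1..n}" and r: "\<rho> \<in> {1..n}" and wr: "w \<noteq> \<rho>"
  shows "(w, par \<rho> w) \<in> E" "par \<rho> w \<in> {1..n}" "dd (par \<rho> w) \<rho> = dd w \<rho> - 1"
    "dd w \<rho> \<ge> 1" "par \<rho> w \<noteq> w"
proof -
  have d: "dd w \<rho> \<noteq> 0"
  proof
    assume "dd w \<rho> = 0"
    then have "w = \<rho>" by (rule dist_0[OF w r])
    with wr show False by simp
  qed
  then show "dd w \<rho> \<ge> 1" by simp
  have sp: "Suc (dd w \<rho> - 1) = dd w \<rho>" using d by simp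
  have "(w,\<rho>) \<in> E ^^ (Suc (dd w \<rho> - 1))" unfolding sp by (rule reach[OF w r])
  then have "\<exists>y. (w,y) \<in> E \<and> (y,\<rho>) \<in> E ^^ (dd w \<rho> - 1)" by (rule relpow_Suc_D2)
  then have P: "(w, par \<rho> w) \<in> E \<and> (par \<rho> w, \<rho>) \<in> E ^^ (dd w \<rho> - 1)"
    unfolding par_def by (rule someI_ex)
  then show e: "(w, par \<rho> w) \<in> E" by simp
  then show b: "par \<rho> w \<in> {1..n}" using E_box by blast
  have le: "dd (par \<rho> w) \<rho> \<le> dd w \<rho> - 1" using P dist_le by blast
  have "(w, \<rho>) \<in> E ^^ (Suc (dd (par \<rho> w) \<rho>))"
    using relpow_Suc_I2[OF e reach[OF b r]] .
  then have "dd w \<rho> \<le> Suc (dd (par \<rho> w) \<rho>)" by (rule dist_le)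
  with le d show "dd (par \<rho> w) \<rho> = dd w \<rho> - 1" by linarith
  show "par \<rho> w \<noteq> w" using e noloop by auto
qed

definition alpha :: "nat \<Rightarrow> real \<Rightarrow> nat \<times> nat \<Rightarrow> real" where
  "alpha \<rho> t v = (if (\<exists>w\<in>{1..n}. w \<noteq> \<rho> \<and> v = (par \<rho> w, w)) \<or> (\<rho> \<in> Leak \<and> v = (0, \<rho>)) then t else 0)"

lemma alpha_pos: assumes "\<rho> \<in> {1..n}" "m \<noteq> 0"
  shows "alpha \<rho> t (m,l) = (if l \<in> {1..n} \<and> l \<noteq> \<rho> \<and> m = par \<rho> l then t else 0)"
  using assms unfolding alpha_def by auto

lemma alpha_zero: assumes "\<rho> \<in> {1..n}"
  shows "alpha \<rho> t (0,l) = (if \<rho> \<in> Leak \<and> l = \<rho> then t else 0)"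
proof -
  have "\<not> (\<exists>w\<in>{1..n}. w \<noteq> \<rho> \<and> (0,l) = (par \<rho> w, w))"
    using par(2)[OF _ assms] by fastforce
  then show ?thesis unfolding alpha_def by auto
qed

lemma ev_A: assumes r: "r < n" and c: "c < n" and rho: "\<rho> \<in> {1..n}"
  shows "ev (alpha \<rho> t) (AA $$ (r,c)) =
    (if r = c then (if r+1 = \<rho> then (if \<rho> \<in> Leak then -t else 0) else -t)
     else if c+1 \<noteq> \<rho> \<and> r+1 = par \<rho> (c+1) then t else 0)"
proof -
  interpret h: comm_ring_hom "ev (alpha \<rho> t)" by (rule ev_hom)
  show ?thesis
  proof (cases "r = c")
    case True
    let ?l = "r+1"
    let ?S = "{m. (?l, m) \<in> E}"
    have lb: "?l \<in> {1..n}" using r by auto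
    have "ev (alpha \<rho> t) (\<Sum>m\<in>?S. mvar (m, ?l)) = (\<Sum>m\<in>?S. alpha \<rho> t (m, ?l))"
      by (simp add: ev_sum)
    also have "\<dots> = (\<Sum>m\<in>?S. if ?l \<noteq> \<rho> then (if m = par \<rho> ?l then t else 0) else 0)"
    proof (rule sum.cong[OF refl])
      fix m assume "m \<in> ?S"
      then have "m \<noteq> 0" using E_box by fastforce
      then show "alpha \<rho> t (m, ?l) = (if ?l \<noteq> \<rho> then (if m = par \<rho> ?l then t else 0) else 0)"
        using alpha_pos[OF rho] lb by auto
    qed
    also have "\<dots> = (if ?l \<noteq> \<rho> then t else 0)"
    proof (cases "?l = \<rho>")
      case False
      have "par \<rho> ?l \<in> ?S" using par(1)[OF lb rho False] by simp
      then show ?thesis using False finite_E_succ by simp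
    qed simp
    finally have s: "ev (alpha \<rho> t) (\<Sum>m\<in>?S. mvar (m, ?l)) = (if ?l \<noteq> \<rho> then t else 0)" .
    have "AA $$ (r,c) = - (\<Sum>m\<in>?S. mvar (m, ?l)) - (if ?l \<in> Leak then mvar (0, ?l) else 0)"
      using A_index[OF r c] True by (simp add: comp_entry_def)
    then show ?thesis using True s alpha_zero[OF rho] by (auto simp: h.hom_uminus h.hom_minus)
  next
    case False
    have lb: "c+1 \<in> {1..n}" using c by auto
    have "AA $$ (r,c) = (if (c+1, r+1) \<in> E then mvar (r+1, c+1) else 0)"
      using A_index[OF r c] False by (simp add: comp_entry_def)
    moreover have "c+1 \<noteq> \<rho> \<Longrightarrow> (c+1, par \<rho> (c+1)) \<in> E" using par(1)[OF lb rho] by simp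
    ultimately show ?thesis using False alpha_pos[OF rho, of "r+1" t "c+1"] lb by auto
  qed
qed

definition Ct :: "nat \<Rightarrow> real \<Rightarrow> real poly mat" where
  "Ct \<rho> t = map_mat (map_poly (ev (alpha \<rho> t))) (char_poly_matrix AA)"

lemma Ct_carrier[simp]: "Ct \<rho> t \<in> carrier_mat n n"
  unfolding Ct_def by simp

lemma cpm_index: "r < n \<Longrightarrow> c < n \<Longrightarrow>
  char_poly_matrix AA $$ (r,c) = (if r = c then [:0,1:] else 0) + [: - AA $$ (r,c) :]"
  unfolding char_poly_matrix_def by (simp add: comp_matrix_def)

lemma Ct_index: assumes r: "r < n" and c: "c < n" and rho: "\<rho> \<in> {1..n}"
  shows "Ct \<rho> t $$ (r,c) =
    (if r = c then (if r+1 = \<rho> then [: (if \<rho> \<in> Leak then t else 0), 1 :] else [: t, 1 :])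
     else if c+1 \<noteq> \<rho> \<and> r+1 = par \<rho> (c+1) then [: -t :] else 0)"
proof -
  interpret h: map_poly_comm_ring_hom "ev (alpha \<rho> t)" by (rule map_poly_comm_ring_hom.intro, rule ev_hom)
  have "Ct \<rho> t $$ (r,c) = map_poly (ev (alpha \<rho> t)) (char_poly_matrix AA $$ (r,c))"
  proof -
    have "dim_row (char_poly_matrix AA) = n" "dim_col (char_poly_matrix AA) = n"
      by (simp_all add: char_poly_matrix_def comp_matrix_def)
    then show ?thesis unfolding Ct_def using r c by simp
  qed
  also have "\<dots> = (if r = c then [:0,1:] else 0) + [: - ev (alpha \<rho> t) (AA $$ (r,c)) :]"
  proof -
    have m: "map_poly (ev (alpha \<rho> t)) [:x:] = [:ev (alpha \<rho> t) x:]" for x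
      by (cases "x = 0") (auto simp: map_poly_simps)
    show ?thesis unfolding cpm_index[OF r c] by (simp add: h.hom_add m h.base.hom_uminus)
  qed
  finally show ?thesis using ev_A[OF r c rho, of t] by auto
qed

end



lemma pow2_ne: fixes C :: real assumes "C \<noteq> 0" "e > 0" shows "C \<noteq> C * 2^e"
proof
  assume "C = C * 2^e"
  then have "(2::real)^e = 1" using assms(1) by (metis mult.right_neutral mult_left_cancel)
  moreover have "(1::real) < 2^e" using assms(2) by (simp add: one_less_power)
  ultimately show False by simp
qed

context cm begin

lemma det_Ct: assumes rho: "\<rho> \<in> {1..n}"
  shows "det (Ct \<rho> t) = [:(if \<rho> \<in> Leak then t else 0), 1:] * [:t,1:]^(n-1)"
proof -
  let ?X = "[:(if \<rho> \<in> Leak then t else 0), 1:]"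
  have "det (Ct \<rho> t) = signof id * (\<Prod>c=0..<n. Ct \<rho> t $$ (id c, c))"
  proof (rule det_unique_perm[OF Ct_carrier permutes_id, where f = "\<lambda>r. dd (r+1) \<rho>"])
    fix r c assume rc: "r < n" "c < n" "r \<noteq> id c" "Ct \<rho> t $$ (r,c) \<noteq> 0"
    then have "c+1 \<noteq> \<rho>" "r+1 = par \<rho> (c+1)" using Ct_index[OF rc(1,2) rho, of t]
      by (auto split: if_splits)
    then show "dd (r+1) \<rho> < dd (id c + 1) \<rho>" using par[of "c+1" \<rho>] rc rho by auto
  qed
  moreover have "(\<Prod>c=0..<n. Ct \<rho> t $$ (id c, c)) = (\<Prod>c=0..<n. if c = \<rho> - 1 then ?X else [:t,1:])"
    by (rule prod.cong[OF refl]) (use rho in \<open>auto simp: Ct_index\<close>)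
  moreover have mem: "\<rho> - 1 \<in> {0..<n}" using rho by auto
  moreover have "(\<Prod>c=0..<n. if c = \<rho> - 1 then ?X else [:t,1:]) = (if \<rho> - 1 = \<rho> - 1 then ?X else [:t,1:]) * (\<Prod>c\<in>{0..<n}-{\<rho>-1}. if c = \<rho> - 1 then ?X else [:t,1:])"
    by (rule prod.remove[OF finite_atLeastLessThan mem])
  moreover have "(\<Prod>c\<in>{0..<n}-{\<rho>-1}. if c = \<rho> - 1 then ?X else [:t,1:]) = (\<Prod>c\<in>{0..<n}-{\<rho>-1}. [:t,1:])"
    by (rule prod.cong) auto
  moreover have "(\<Prod>c\<in>{0..<n}-{\<rho>-1}. ([:t,1:] :: real poly)) = [:t,1:]^(n-1)" using mem by simp
  ultimately show ?thesis by simp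
qed

lemma lhs_eval: assumes rho: "\<rho> \<in> {1..n}"
  shows "ev (alpha \<rho> t) (lhs_coeff n E Leak k) = coeff ([:(if \<rho> \<in> Leak then t else 0), 1:] * [:t,1:]^(n-1)) k"
proof -
  interpret h: map_poly_comm_ring_hom "ev (alpha \<rho> t)" by (rule map_poly_comm_ring_hom.intro, rule ev_hom)
  have 1: "ev (alpha \<rho> t) (coeff p k) = coeff (map_poly (ev (alpha \<rho> t)) p) k" for p
    by (rule coeff_map_poly[symmetric]) (rule h.base.hom_zero)
  have 2: "map_poly (ev (alpha \<rho> t)) (det (char_poly_matrix AA)) = det (Ct \<rho> t)"
    unfolding Ct_def by (rule h.hom_det[symmetric])
  show ?thesis unfolding lhs_coeff_def 1 2 det_Ct[OF rho] ..
qed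

lemma lhs_nonconst: assumes k: "k < n" and cond: "Leak \<noteq> {} \<or> 1 \<le> k"
  shows "\<not> is_constant_mpoly (lhs_coeff n E Leak k)"
proof
  assume "is_constant_mpoly (lhs_coeff n E Leak k)"
  then obtain c where c: "lhs_coeff n E Leak k = mconst c" unfolding is_constant_mpoly_def by blast
  obtain \<rho> where rho: "\<rho> \<in> {1..n}" and rl: "\<rho> \<in> Leak \<longleftrightarrow> Leak \<noteq> {}"
  proof (cases "Leak = {}")
    case True then show ?thesis using that[of 1] k by auto
  next
    case False then obtain x where x: "x \<in> Leak" by blast
    then have xb: "x \<in> {1..n}" using Lbox by blast
    show ?thesis by (rule that[OF xb]) (use x False in auto)
  qed
  let ?P = "\<lambda>t::real. [:(if \<rho> \<in> Leak then t else 0), 1:] * [:t,1:]^(n-1)"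
  have eq: "coeff (?P 1) k = coeff (?P 2) k"
    using lhs_eval[OF rho, of 1 k] lhs_eval[OF rho, of 2 k] c by simp
  show False
  proof (cases "Leak = {}")
    case False
    have nn: "Suc (n-1) = n" using k by simp
    have "?P t = [:t,1:]^n" for t
    proof -
      have "?P t = [:t,1:] * [:t,1:]^(n-1)" using rl False by simp
      also have "\<dots> = [:t,1:]^(Suc (n-1))" by (simp only: power_Suc)
      finally show ?thesis unfolding nn .
    qed
    then have "coeff (?P t) k = of_nat (n choose k) * t^(n-k)" for t
      using k by (simp add: coeff_linear_poly_power)
    with eq have "of_nat (n choose k) = (of_nat (n choose k) :: real) * 2^(n-k)" by simp
    moreover have "(of_nat (n choose k) :: real) \<noteq> 0" using k by simp
    ultimately show False using pow2_ne[of "of_nat (n choose k)" "n-k"] k by simp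
  next
    case True
    then have k1: "1 \<le> k" using cond by simp
    then obtain k' where k': "k = Suc k'" by (cases k) auto
    have "?P t = pCons 0 ([:t,1:]^(n-1))" for t using True rl by simp
    then have "coeff (?P t) k = of_nat ((n-1) choose k') * t^(n-1-k')" for t
      using k k' by (simp add: coeff_linear_poly_power)
    with eq have "of_nat ((n-1) choose k') = (of_nat ((n-1) choose k') :: real) * 2^(n-1-k')" by simp
    moreover have "(of_nat ((n-1) choose k') :: real) \<noteq> 0" using k k' by simp
    ultimately show False using pow2_ne[of "of_nat ((n-1) choose k')" "n-1-k'"] k k' by simp
  qed
qed

lemma colsum_zero: assumes L: "Leak = {}" and c: "c < n"
  shows "(\<Sum>r<n. AA $$ (r,c)) = 0"
proof -
  let ?k = "c+1"
  let ?S = "{m. (?k, m) \<in> E}"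
  have kb: "?k \<in> {1..n}" using c by auto
  have "(\<Sum>r<n. AA $$ (r,c)) = (\<Sum>r<n. comp_entry E Leak (Suc r) ?k)"
    by (rule sum.cong) (use c in \<open>auto simp: A_index\<close>)
  also have "\<dots> = (\<Sum>l\<in>{1..n}. comp_entry E Leak l ?k)"
    by (simp add: sum.atLeast1_atMost_eq)
  also have "\<dots> = comp_entry E Leak ?k ?k + (\<Sum>l\<in>{1..n}-{?k}. comp_entry E Leak l ?k)"
    by (rule sum.remove) (use kb in auto)
  also have "(\<Sum>l\<in>{1..n}-{?k}. comp_entry E Leak l ?k) = (\<Sum>l\<in>{1..n}-{?k}. if (?k,l) \<in> E then mvar (l,?k) else 0)"
    by (rule sum.cong) (auto simp: comp_entry_def)
  also have "\<dots> = (\<Sum>l\<in>{l\<in>{1..n}-{?k}. (?k,l) \<in> E}. mvar (l,?k))"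
    by (rule sum.inter_filter[symmetric]) simp
  also have "{l\<in>{1..n}-{?k}. (?k,l) \<in> E} = ?S" using Ebox noloop by auto
  finally show ?thesis using L by (simp add: comp_entry_def)
qed

lemma lhs_const: assumes L: "Leak = {}" and n: "0 < n"
  shows "lhs_coeff n E Leak 0 = 0"
proof -
  interpret c0: comm_ring_hom "\<lambda>p::mpoly poly. coeff p 0"
    by unfold_locales (auto simp: coeff_mult_0)
  define N where "N = mat n n (\<lambda>(r,c). - AA $$ (r,c))"
  have N: "N \<in> carrier_mat n n" unfolding N_def by simp
  have "lhs_coeff n E Leak 0 = det (map_mat (\<lambda>p. coeff p 0) (char_poly_matrix AA))"
    unfolding lhs_coeff_def by (simp add: c0.hom_det)
  also have "map_mat (\<lambda>p. coeff p 0) (char_poly_matrix AA) = N"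
    by (rule eq_matI) (auto simp: N_def cpm_index char_poly_matrix_def comp_matrix_def)
  finally have l: "lhs_coeff n E Leak 0 = det N" .
  define P where "P = mat n n (\<lambda>(r,c). if r = 0 \<or> r = c then 1 else (0::mpoly))"
  have P: "P \<in> carrier_mat n n" unfolding P_def by simp
  have "det P = signof id * (\<Prod>c=0..<n. P $$ (id c, c))"
  proof (rule det_unique_perm[OF P permutes_id, where f = "\<lambda>r. if r = 0 then 0 else 1"])
    fix r c assume rc: "r < n" "c < n" "r \<noteq> id c" "P $$ (r,c) \<noteq> 0"
    then show "(if r = 0 then 0 else 1) < (if id c = 0 then 0 else (1::nat))"
      unfolding P_def by (auto split: if_splits)
  qed
  then have dP: "det P = 1" unfolding P_def by simp
  have row0: "(P * N) $$ (0, c) = 0" if c: "c < n" for c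
  proof -
    have "(P * N) $$ (0, c) = (\<Sum>r<n. N $$ (r,c))"
      using n c unfolding P_def N_def
      by (simp add: scalar_prod_def atLeast0LessThan)
    also have "\<dots> = - (\<Sum>r<n. AA $$ (r,c))"
      unfolding N_def using c by (simp add: sum_negf)
    finally show ?thesis using colsum_zero[OF L c] by simp
  qed
  have PN: "P * N \<in> carrier_mat n n" using P N by simp
  have "det (P * N) = 0"
    unfolding det_def'[OF PN]
  proof (rule sum.neutral, rule ballI)
    fix p assume "p \<in> {p. p permutes {0..<n}}"
    then have "p 0 < n" using n permutes_in_image by fastforce
    then have "(\<Prod>i = 0..<n. (P * N) $$ (i, p i)) = 0"
      using n row0 by (intro prod_zero) (auto intro!: bexI[of _ 0])
    then show "signof p * (\<Prod>i = 0..<n. (P * N) $$ (i, p i)) = 0" by simp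
  qed
  then have "det N = 0" using det_mult[OF P N] dP by simp
  with l show ?thesis by simp
qed

end



lemma coeff_signpow: "coeff ((-1)^m * p) k = (-1)^m * coeff (p :: 'a::comm_ring_1 poly) k"
  by (induction m) auto

locale cmij = cm +
  fixes i j :: nat
  assumes ib: "i \<in> {1..n}" and jb: "j \<in> {1..n}"
begin

abbreviation "LL \<equiv> dd j i"
definition vv :: "nat \<Rightarrow> nat" where "vv s = (par i ^^ s) j"
definition VV :: "nat set" where "VV = vv ` {0..LL}"
definition RR :: "nat \<Rightarrow> nat" where "RR w = (if w \<in> VV then (if w = i then j else par i w) else w)"
definition sig :: "nat \<Rightarrow> nat" where "sig c = RR (c+1) - 1"
definition ff :: "nat \<Rightarrow> nat" where "ff w = (if w \<in> VV then LL - dd w i else LL + 1 + dd w i)"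

lemma vv_0[simp]: "vv 0 = j" by (simp add: vv_def)
lemma vv_Suc: "vv (Suc s) = par i (vv s)" by (simp add: vv_def)

lemma vv_path: "s \<le> LL \<Longrightarrow> vv s \<in> {1..n} \<and> dd (vv s) i = LL - s"
proof (induction s)
  case 0 then show ?case using jb by simp
next
  case (Suc s)
  then have IH: "vv s \<in> {1..n}" "dd (vv s) i = LL - s" by auto
  have "vv s \<noteq> i" using IH(2) Suc.prems by (metis dist_self diff_is_0_eq not_less_eq_eq)
  then show ?case using par[OF IH(1) ib] IH(2) by (simp add: vv_Suc)
qed

lemma vv_L: "vv LL = i"
  using vv_path[of LL] dist_0 ib by auto

lemma vv_inj: "inj_on vv {0..LL}"
proof (rule inj_onI)
  fix a b assume "a \<in> {0..LL}" "b \<in> {0..LL}" "vv a = vv b"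
  then show "a = b" using vv_path[of a] vv_path[of b] by auto
qed

lemma VV_box: "VV \<subseteq> {1..n}" unfolding VV_def using vv_path by auto
lemma card_VV: "card VV = LL + 1" unfolding VV_def using card_image[OF vv_inj] by simp
lemma i_VV: "i \<in> VV" unfolding VV_def using vv_L by force
lemma j_VV: "j \<in> VV" unfolding VV_def using vv_0 by force
lemma VV_dist: "w \<in> VV \<Longrightarrow> dd w i \<le> LL" unfolding VV_def using vv_path by auto
lemma VV_eq: "w \<in> VV \<Longrightarrow> w' \<in> VV \<Longrightarrow> dd w i = dd w' i \<Longrightarrow> w = w'"
proof -
  assume w: "w \<in> VV" and w': "w' \<in> VV" and d: "dd w i = dd w' i"
  obtain a where a: "a \<le> LL" "w = vv a" using w unfolding VV_def by auto
  obtain b where b: "b \<le> LL" "w' = vv b" using w' unfolding VV_def by auto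
  have "LL - a = LL - b" using vv_path[OF a(1)] vv_path[OF b(1)] a b d by simp
  then have "a = b" using a b by simp
  then show "w = w'" using a b by simp
qed

lemma par_VV: assumes w: "w \<in> VV" and wi: "w \<noteq> i"
  shows "par i w \<in> VV" "dd (par i w) i = dd w i - 1" "1 \<le> dd w i" "par i w \<noteq> w" "(w, par i w) \<in> E"
proof -
  obtain s where s: "s \<le> LL" "w = vv s" using w unfolding VV_def by auto
  have "s \<noteq> LL" using s wi vv_L by auto
  then have "par i w = vv (Suc s)" "Suc s \<le> LL" using s by (auto simp: vv_Suc)
  then show "par i w \<in> VV" unfolding VV_def by auto
  have wb: "w \<in> {1..n}" using w VV_box by auto
  show "dd (par i w) i = dd w i - 1" "1 \<le> dd w i" "par i w \<noteq> w" "(w, par i w) \<in> E"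
    using par[OF wb ib wi] by auto
qed

lemma RR_VV: assumes w: "w \<in> VV" shows "RR w \<in> VV"
proof (cases "w = i")
  case True then show ?thesis using w j_VV unfolding RR_def by simp
next
  case False then show ?thesis using w par_VV(1)[OF w False] unfolding RR_def by simp
qed

lemma RR_box: assumes "w \<in> {1..n}" shows "RR w \<in> {1..n}"
proof (cases "w \<in> VV")
  case True then show ?thesis using RR_VV[OF True] VV_box by blast
next
  case False then show ?thesis using assms by (simp add: RR_def)
qed

lemma RR_inj: "inj_on RR {1..n}"
proof (rule inj_onI)
  fix w w' assume wb: "w \<in> {1..n}" and wb': "w' \<in> {1..n}" and eq: "RR w = RR w'"
  have aux: "par i w' \<noteq> j" if "w' \<in> VV" "w' \<noteq> i" for w'
    using par_VV[OF that] VV_dist[OF that(1)] by auto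
  show "w = w'"
  proof (cases "w \<in> VV")
    case True note wV = this
    show ?thesis
    proof (cases "w' \<in> VV")
      case True
      show ?thesis
      proof (cases "w = i")
        case wi: True
        show ?thesis
        proof (rule ccontr)
          assume ne: "w \<noteq> w'"
          then have w'i: "w' \<noteq> i" using wi by simp
          have "RR w = j" using wi i_VV unfolding RR_def by simp
          moreover have "RR w' = par i w'" using True w'i unfolding RR_def by simp
          ultimately show False using eq aux[OF True w'i] by simp
        qed
      next
        case wi: False
        show ?thesis
        proof (cases "w' = i")
          case True
          have "RR w = par i w" using wV wi unfolding RR_def by simp
          moreover have "RR w' = j" using True i_VV unfolding RR_def by simp
          ultimately show ?thesis using eq aux[OF wV wi] by simp
        next
          case False
          then have "par i w = par i w'" using eq wV \<open>w' \<in> VV\<close> wi unfolding RR_def by auto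
          then have "dd w i = dd w' i" using par_VV[OF wV wi] par_VV[OF \<open>w' \<in> VV\<close> False] by simp
          then show ?thesis using VV_eq wV \<open>w' \<in> VV\<close> by blast
        qed
      qed
    next
      case False
      then have "RR w' = w'" unfolding RR_def by simp
      then have "w' \<in> VV" using eq RR_VV[OF wV] by simp
      with False show ?thesis by simp
    qed
  next
    case False
    then have Rw: "RR w = w" unfolding RR_def by simp
    show ?thesis
    proof (cases "w' \<in> VV")
      case True
      then have "w \<in> VV" using eq Rw RR_VV[OF True] by simp
      with False show ?thesis by simp
    next
      case F2: False
      then have "RR w' = w'" unfolding RR_def by simp
      then show ?thesis using eq Rw by simp
    qed
  qed
qed

lemma RR_pos: "w \<in> {1..n} \<Longrightarrow> RR w - 1 + 1 = RR w" using RR_box[of w] by auto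

lemma sig_perm: "sig permutes {0..<n}"
proof (rule inj_imp_permutes)
  show "inj_on sig {0..<n}"
  proof (rule inj_onI)
    fix c c' assume c: "c \<in> {0..<n}" and c': "c' \<in> {0..<n}" and eq: "sig c = sig c'"
    have cb: "c+1 \<in> {1..n}" using c by auto
    have cb': "c'+1 \<in> {1..n}" using c' by auto
    have r1: "RR (c+1) \<in> {1..n}" by (rule RR_box[OF cb])
    have r2: "RR (c'+1) \<in> {1..n}" by (rule RR_box[OF cb'])
    have "RR (c+1) - 1 = RR (c'+1) - 1" using eq unfolding sig_def .
    moreover have "1 \<le> RR (c+1)" "1 \<le> RR (c'+1)" using r1 r2 by auto
    ultimately have "RR (c+1) = RR (c'+1)" by arith
    then have "c+1 = c'+1" by (rule inj_onD[OF RR_inj _ cb cb'])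
    then show "c = c'" by simp
  qed
  show "sig c \<in> {0..<n}" if c: "c \<in> {0..<n}" for c
  proof -
    have cb: "c+1 \<in> {1..n}" using c by auto
    have "RR (c+1) \<in> {1..n}" by (rule RR_box[OF cb])
    then show ?thesis unfolding sig_def by auto
  qed
  show "sig c = c" if "c \<notin> {0..<n}" for c
  proof -
    have "c + 1 \<notin> VV" using that VV_box by auto
    then show ?thesis unfolding sig_def RR_def by simp
  qed
  show "finite {0..<n}" by simp
qed

definition Ctp :: "real \<Rightarrow> real poly mat" where "Ctp t = colrep (Ct i t) (i-1) (j-1)"

lemma Ctp_carrier[simp]: "Ctp t \<in> carrier_mat n n" unfolding Ctp_def by simp

lemma Ctp_index: "r < n \<Longrightarrow> c < n \<Longrightarrow> Ctp t $$ (r,c) = (if c = i-1 then (if r = j-1 then 1 else 0) else Ct i t $$ (r,c))"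
  unfolding Ctp_def by (rule colrep_index) simp_all

end



context cmij begin

lemma sig_val: "c < n \<Longrightarrow> sig c + 1 = RR (c+1)"
  unfolding sig_def using RR_box[of "c+1"] by auto

lemma det_Ctp: "det (Ctp t) = signof sig * ([:-t:]^LL * [:t,1:]^(n-1-LL))"
proof -
  have i0: "i - 1 < n" "i - 1 + 1 = i" using ib by auto
  have j0: "j - 1 < n" "j - 1 + 1 = j" using jb by auto
  have "det (Ctp t) = signof sig * (\<Prod>c=0..<n. Ctp t $$ (sig c, c))"
  proof (rule det_unique_perm[OF Ctp_carrier sig_perm, where f = "\<lambda>r. ff (r+1)"])
    fix r c assume r: "r < n" and c: "c < n" and rs: "r \<noteq> sig c" and nz: "Ctp t $$ (r,c) \<noteq> 0"
    have sc: "sig c + 1 = RR (c+1)" using sig_val[OF c] .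
    have cb: "c + 1 \<in> {1..n}" using c by auto
    show "ff (r+1) < ff (sig c + 1)"
    proof (cases "c = i - 1")
      case True
      then have "r = j - 1" using nz Ctp_index[OF r c] by (auto split: if_splits)
      moreover have "sig c = j - 1" using True i0 i_VV unfolding sig_def RR_def by simp
      ultimately show ?thesis using rs by simp
    next
      case ci: False
      then have nz': "Ct i t $$ (r,c) \<noteq> 0" using nz Ctp_index[OF r c] by simp
      have ci': "c + 1 \<noteq> i" using ci i0 by auto
      show ?thesis
      proof (cases "r = c")
        case True
        then have "RR (c+1) \<noteq> c+1" using rs sc by auto
        then have V: "c+1 \<in> VV" and RRc: "RR (c+1) = par i (c+1)" using ci' unfolding RR_def by (auto split: if_splits)
        note pv = par_VV[OF V ci']
        have "dd (c+1) i \<le> LL" using VV_dist[OF V] .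
        then show ?thesis using True sc RRc pv V unfolding ff_def by auto
      next
        case False
        then have e: "r + 1 = par i (c+1)" using nz' Ct_index[OF r c ib, of t] ci'
          by (auto split: if_splits)
        show ?thesis
        proof (cases "c+1 \<in> VV")
          case True
          then have "RR (c+1) = r + 1" using e ci' unfolding RR_def by simp
          then show ?thesis using rs sc by simp
        next
          case nV: False
          then have "RR (c+1) = c+1" unfolding RR_def by simp
          moreover note p = par[OF cb ib ci']
          ultimately show ?thesis using sc e nV unfolding ff_def by (auto split: if_splits)
        qed
      qed
    qed
  qed
  also have "(\<Prod>c=0..<n. Ctp t $$ (sig c, c)) =
      (\<Prod>c=0..<n. if c + 1 \<in> VV then (if c = i - 1 then 1 else [:-t:]) else [:t,1:])"
  proof (rule prod.cong[OF refl])
    fix c assume "c \<in> {0..<n}"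
    then have c: "c < n" by simp
    have sc: "sig c + 1 = RR (c+1)" using sig_val[OF c] .
    have sn: "sig c < n" using sig_perm c permutes_in_image by fastforce
    show "Ctp t $$ (sig c, c) = (if c + 1 \<in> VV then (if c = i - 1 then 1 else [:-t:]) else [:t,1:])"
    proof (cases "c = i - 1")
      case True
      then have "sig c = j - 1" using i0 i_VV unfolding sig_def RR_def by simp
      then show ?thesis using True Ctp_index[OF sn c] i_VV i0 by simp
    next
      case ci: False
      have ci': "c + 1 \<noteq> i" using ci i0 by auto
      show ?thesis
      proof (cases "c + 1 \<in> VV")
        case True
        note pv = par_VV[OF True ci']
        have "RR (c+1) = par i (c+1)" using True ci' unfolding RR_def by simp
        then have s: "sig c + 1 = par i (c+1)" "sig c \<noteq> c" using sc pv by auto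
        then show ?thesis using Ctp_index[OF sn c] ci Ct_index[OF sn c ib, of t] ci' True by simp
      next
        case False
        then have "sig c = c" using sc by (simp add: RR_def)
        then show ?thesis using Ctp_index[OF c c] ci Ct_index[OF c c ib, of t] ci' False by simp
      qed
    qed
  qed
  also have "\<dots> = [:-t:]^LL * [:t,1:]^(n-1-LL)"
  proof -
    let ?W = "{0..<n} \<inter> {c. c + 1 \<in> VV}"
    let ?W' = "{0..<n} \<inter> - {c. c + 1 \<in> VV}"
    have SW: "Suc ` ?W = VV"
    proof
      show "Suc ` ?W \<subseteq> VV" by auto
      show "VV \<subseteq> Suc ` ?W"
      proof
        fix w assume w: "w \<in> VV"
        then have wb: "w \<in> {1..n}" using VV_box by auto
        then have "w - 1 \<in> ?W" using w by auto
        moreover have "w = Suc (w - 1)" using wb by auto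
        ultimately show "w \<in> Suc ` ?W" by (rule rev_image_eqI)
      qed
    qed
    have cW: "card ?W = LL + 1" using card_VV SW card_image[of Suc ?W] by simp
    have iW: "i - 1 \<in> ?W" using i0 i_VV by simp
    have fW: "finite ?W" by simp
    have "(\<Prod>c\<in>?W. if c = i - 1 then 1 else [:-t:]) = 1 * (\<Prod>c\<in>?W - {i-1}. if c = i - 1 then 1 else [:-t:])"
      using prod.remove[OF fW iW, of "\<lambda>c. if c = i - 1 then 1 else [:-t:]"] by simp
    also have "(\<Prod>c\<in>?W - {i-1}. if c = i - 1 then 1 else [:-t:]) = (\<Prod>c\<in>?W - {i-1}. [:-t:])"
      by (rule prod.cong) auto
    also have "\<dots> = [:-t:]^LL" using cW iW by (simp add: card_Diff_singleton)
    finally have p1: "(\<Prod>c\<in>?W. if c = i - 1 then 1 else [:-t:]) = [:-t:]^LL" by simp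
    have "card ?W' = n - (LL + 1)"
    proof -
      have "?W' = {0..<n} - ?W" by auto
      then show ?thesis using cW card_Diff_subset[OF fW, of "{0..<n}"] by auto
    qed
    then have p2: "(\<Prod>c\<in>?W'. [:t,1:]) = [:t,1:]^(n-1-LL)" by simp
    show ?thesis by (simp only: prod.If_cases[OF finite_atLeastLessThan] p1 p2)
  qed
  finally show ?thesis .
qed

lemma coeff_Ctp: assumes "k \<le> n - 1 - LL"
  shows "coeff (det (Ctp t)) k = of_int (sign sig) * (-t)^LL * (of_nat ((n-1-LL) choose k) * t^(n-1-LL-k))"
proof -
  have "det (Ctp t) = Polynomial.smult (of_int (sign sig) * (-t)^LL) ([:t,1:]^(n-1-LL))"
    unfolding det_Ctp by (simp add: of_int_poly poly_const_pow mult_ac)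
  then show ?thesis using assms by (simp add: coeff_linear_poly_power)
qed

lemma rhs_eval: "ev (alpha i t) (rhs_coeff n E Leak i j k) = (-1)^(j-1+(i-1)) * coeff (det (Ctp t)) k"
proof -
  interpret h: map_poly_comm_ring_hom "ev (alpha i t)" by (rule map_poly_comm_ring_hom.intro, rule ev_hom)
  have M: "char_poly_matrix AA \<in> carrier_mat n n" by simp
  have i0: "i - 1 < n" using ib by auto
  have j0: "j - 1 < n" using jb by auto
  have "rhs_coeff n E Leak i j k = coeff ((-1)^(j-1+(i-1)) * det (colrep (char_poly_matrix AA) (i-1) (j-1))) k"
    unfolding rhs_coeff_def laplace_colrep[OF M i0 j0] ..
  also have "\<dots> = (-1)^(j-1+(i-1)) * coeff (det (colrep (char_poly_matrix AA) (i-1) (j-1))) k"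
    by (rule coeff_signpow)
  finally have r: "rhs_coeff n E Leak i j k = (-1)^(j-1+(i-1)) * coeff (det (colrep (char_poly_matrix AA) (i-1) (j-1))) k" .
  have "ev (alpha i t) (coeff (det (colrep (char_poly_matrix AA) (i-1) (j-1))) k)
      = coeff (map_poly (ev (alpha i t)) (det (colrep (char_poly_matrix AA) (i-1) (j-1)))) k"
    by (rule coeff_map_poly[symmetric]) (rule h.base.hom_zero)
  also have "map_poly (ev (alpha i t)) (det (colrep (char_poly_matrix AA) (i-1) (j-1))) = det (Ctp t)"
    unfolding h.hom_det[symmetric] h.colrep_hom[OF M] Ctp_def Ct_def ..
  finally have e2: "ev (alpha i t) (coeff (det (colrep (char_poly_matrix AA) (i-1) (j-1))) k) = coeff (det (Ctp t)) k" .
  have e1: "ev (alpha i t) ((-1)^m * x) = (-1)^m * ev (alpha i t) x" for x m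
    by (simp only: h.base.hom_mult h.base.hom_power h.base.hom_uminus h.base.hom_one)
  show ?thesis unfolding r e1 e2 ..
qed

lemma rhs_nonconst: assumes k: "k < n" and cond: "if i = j then k + 2 \<le> n else k + LL + 1 \<le> n"
  shows "\<not> is_constant_mpoly (rhs_coeff n E Leak i j k)"
proof
  assume "is_constant_mpoly (rhs_coeff n E Leak i j k)"
  then obtain c where c: "rhs_coeff n E Leak i j k = mconst c" unfolding is_constant_mpoly_def by blast
  have kle: "k \<le> n - 1 - LL" and pos: "0 < LL + (n - 1 - LL - k)"
  proof -
    show "k \<le> n - 1 - LL" using cond k by (auto split: if_splits)
    show "0 < LL + (n - 1 - LL - k)"
    proof (cases "i = j")
      case True then show ?thesis using cond by auto
    next
      case False
      then have "LL \<noteq> 0" using dist_0 ib jb by metis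
      then show ?thesis by simp
    qed
  qed
  let ?m = "n - 1 - LL"
  let ?K = "(-1)^(j-1+(i-1)) * of_int (sign sig) * of_nat (?m choose k) * (-1)^LL :: real"
  have v: "ev (alpha i t) (rhs_coeff n E Leak i j k) = ?K * t^LL * t^(?m - k)" for t
    unfolding rhs_eval coeff_Ctp[OF kle] by (simp add: power_minus[of t] mult_ac)
  have "?K * 1^LL * 1^(?m - k) = ?K * 2^LL * 2^(?m-k)"
    using v[of 1] v[of 2] c by simp
  then have "?K = ?K * 2^(LL + (?m - k))" by (simp add: power_add mult_ac)
  moreover have K0: "?K \<noteq> 0" using kle by (simp add: sign_def)
  have "?K \<noteq> ?K * 2^(LL + (?m - k))" by (rule pow2_ne[OF K0 pos])
  ultimately show False by simp
qed

end



context cmij begin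

lemma rhs_deg: assumes ij: "i \<noteq> j"
  shows "degree (det (colrep (char_poly_matrix AA) (i-1) (j-1))) \<le> n - 1 - LL"
proof -
  define i0 where "i0 = i - 1"
  define j0 where "j0 = j - 1"
  have i0n: "i0 < n" and ii: "i0 + 1 = i" using ib unfolding i0_def by auto
  have j0n: "j0 < n" and jj: "j0 + 1 = j" using jb unfolding j0_def by auto
  have ij0: "i0 \<noteq> j0" using ii jj ij by auto
  let ?M = "char_poly_matrix AA"
  let ?C = "colrep ?M i0 j0"
  have M: "?M \<in> carrier_mat n n" by simp
  have C: "?C \<in> carrier_mat n n" by simp
  have Cind: "?C $$ (r,c) = (if c = i0 then (if r = j0 then 1 else 0)
      else (if r = c then [:0,1:] else 0) + [:- AA $$ (r,c):])" if "r < n" "c < n" for r c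
    using colrep_index[OF M that] cpm_index[OF that] by simp
  have degC: "degree (?C $$ (r,c)) \<le> (if r = c then 1 else 0)" if rc: "r < n" "c < n" for r c
  proof (cases "c = i0")
    case True then show ?thesis using Cind[OF rc] by simp
  next
    case False
    show ?thesis
    proof (cases "r = c")
      case True
      have "degree ([:0,1:] + [:- AA $$ (r,c):]) \<le> 1" by (rule degree_add_le) auto
      then show ?thesis using Cind[OF rc] False True by simp
    next
      case F2: False
      then show ?thesis using Cind[OF rc] False by simp
    qed
  qed
  have edge: "(c+1, r+1) \<in> E" if rc: "r < n" "c < n" and ne: "r \<noteq> c" "c \<noteq> i0" and nz: "?C $$ (r,c) \<noteq> 0" for r c
  proof -
    have "[:- AA $$ (r,c):] \<noteq> 0" using nz Cind[OF rc] ne by simp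
    then have "comp_entry E Leak (r+1) (c+1) \<noteq> 0" using A_index[OF rc] by simp
    then show ?thesis using ne unfolding comp_entry_def by (auto split: if_splits)
  qed
  have key: "degree (\<Prod>r = 0..<n. ?C $$ (r, p r)) \<le> n - 1 - LL" if p: "p permutes {0..<n}" for p
  proof (cases "\<exists>r\<in>{0..<n}. ?C $$ (r, p r) = 0")
    case True
    then have "(\<Prod>r = 0..<n. ?C $$ (r, p r)) = 0" by (simp add: prod_zero)
    then show ?thesis by simp
  next
    case False
    then have nz: "?C $$ (r, p r) \<noteq> 0" if "r < n" for r using that by auto
    have pin: "p r < n" if "r < n" for r using permutes_in_image[OF p] that by auto
    have pinj: "p a = p b \<Longrightarrow> a = b" for a b using permutes_inj[OF p] by (auto dest: injD)
    have pj: "p j0 = i0"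
    proof -
      have "i0 \<in> p ` {0..<n}" using permutes_image[OF p] i0n by auto
      then obtain r where r: "r < n" "p r = i0" by auto
      then have "r = j0" using nz[OF r(1)] Cind[OF r(1) i0n] by (auto split: if_splits)
      then show ?thesis using r by simp
    qed
    define x where "x s = (p ^^ s) i0" for s
    have x0: "x 0 = i0" unfolding x_def by simp
    have xS: "x (Suc s) = p (x s)" for s unfolding x_def by simp
    have xn: "x s < n" for s by (induction s) (use x0 xS i0n pin in auto)
    have nf: "p (x s) \<noteq> x s" for s
    proof (induction s)
      case 0
      show ?case
      proof
        assume "p (x 0) = x 0"
        then have "p i0 = p j0" using x0 pj by simp
        then show False using pinj ij0 by blast
      qed
    next
      case (Suc s)
      show ?case
      proof
        assume "p (x (Suc s)) = x (Suc s)"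
        then have "p (p (x s)) = p (x s)" using xS by simp
        then have "p (x s) = x s" by (rule pinj)
        with Suc show False by simp
      qed
    qed
    have walk: "s \<le> LL \<Longrightarrow> (x s + 1, i) \<in> E ^^ s" for s
    proof (induction s)
      case 0 then show ?case using x0 ii by simp
    next
      case (Suc s)
      then have IH: "(x s + 1, i) \<in> E ^^ s" by simp
      have xj: "x s \<noteq> j0"
      proof
        assume "x s = j0"
        then have "(j, i) \<in> E ^^ s" using IH jj by simp
        then have "LL \<le> s" by (rule dist_le)
        with Suc.prems show False by simp
      qed
      have pi: "p (x s) \<noteq> i0"
      proof
        assume "p (x s) = i0"
        then have "p (x s) = p j0" using pj by simp
        then show False using pinj xj by blast
      qed
      have e: "(p (x s) + 1, x s + 1) \<in> E"
        by (rule edge[OF xn pin[OF xn] _ pi nz[OF xn]]) (use nf in metis)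
      have "(p (x s) + 1, i) \<in> E ^^ Suc s" by (rule relpow_Suc_I2[OF e IH])
      then show ?case using xS by simp
    qed
    have notj: "x s \<noteq> j0" if "s < LL" for s
    proof
      assume "x s = j0"
      then have "(j, i) \<in> E ^^ s" using walk[of s] that jj by simp
      then have "LL \<le> s" by (rule dist_le)
      with that show False by simp
    qed
    have distinct: "b \<le> LL \<Longrightarrow> a < b \<Longrightarrow> x a \<noteq> x b" for a b
    proof (induction a arbitrary: b)
      case 0
      then obtain b' where b: "b = Suc b'" by (cases b) auto
      show ?case
      proof
        assume "x 0 = x b"
        then have "p (x b') = p j0" using x0 xS b pj by simp
        then have "x b' = j0" by (rule pinj)
        moreover have "b' < LL" using b 0 by simp
        ultimately show False using notj by blast
      qed
    next
      case (Suc a)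
      then obtain b' where b: "b = Suc b'" by (cases b) auto
      have "x a \<noteq> x b'" using Suc.IH[of b'] Suc.prems b by simp
      then show ?case using xS b pinj by metis
    qed
    have injx: "inj_on x {0..LL}"
      by (rule inj_onI) (metis atLeastAtMost_iff distinct linorder_neqE_nat)
    define F where "F = {0..<n} \<inter> {r. p r = r}"
    define X where "X = x ` {0..LL}"
    have cX: "card X = LL + 1" unfolding X_def using card_image[OF injx] by simp
    have XF: "X \<inter> F = {}" unfolding X_def F_def using nf by auto
    have Xs: "X \<subseteq> {0..<n}" unfolding X_def using xn by auto
    have Fs: "F \<subseteq> {0..<n}" unfolding F_def by auto
    have "card F + card X = card (F \<union> X)"
    proof (rule card_Un_disjoint[symmetric])
    show "finite F" unfolding F_def by simp
    show "finite X" unfolding X_def by simp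
    show "F \<inter> X = {}" using XF by auto
  qed
    also have "\<dots> \<le> n" using card_mono[of "{0..<n}" "F \<union> X"] Fs Xs by simp
    finally have cF: "card F \<le> n - 1 - LL" using cX by simp
    have "degree (\<Prod>r = 0..<n. ?C $$ (r, p r)) \<le> (\<Sum>r = 0..<n. degree (?C $$ (r, p r)))"
      using degree_prod_sum_le[of "{0..<n}" "\<lambda>r. ?C $$ (r, p r)"] by (simp add: comp_def)
    also have "\<dots> \<le> (\<Sum>r = 0..<n. if p r = r then 1 else 0)"
    proof (rule sum_mono)
      fix r assume "r \<in> {0..<n}"
      then have r: "r < n" by simp
      show "degree (?C $$ (r, p r)) \<le> (if p r = r then 1 else 0)"
        using degC[OF r pin[OF r]] by (auto split: if_splits)
    qed
    also have "\<dots> = card F" unfolding F_def by (simp add: sum.If_cases)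
    finally show ?thesis using cF by simp
  qed
  have "degree (det ?C) \<le> n - 1 - LL" unfolding det_def'[OF C]
    by (rule degree_sum_le) (use key finite_permutations[of "{0..<n}"] in auto)
  then show ?thesis unfolding i0_def j0_def .
qed

lemma rhs_expand: "rhs_coeff n E Leak i j k = (-1)^(j-1+(i-1)) * coeff (det (colrep (char_poly_matrix AA) (i-1) (j-1))) k"
proof -
  have M: "char_poly_matrix AA \<in> carrier_mat n n" by simp
  have i0: "i - 1 < n" using ib by auto
  have j0: "j - 1 < n" using jb by auto
  have "rhs_coeff n E Leak i j k = coeff ((-1)^(j-1+(i-1)) * det (colrep (char_poly_matrix AA) (i-1) (j-1))) k"
    unfolding rhs_coeff_def laplace_colrep[OF M i0 j0] ..
  also have "\<dots> = (-1)^(j-1+(i-1)) * coeff (det (colrep (char_poly_matrix AA) (i-1) (j-1))) k"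
    by (rule coeff_signpow)
  finally show ?thesis .
qed

lemma rhs_const_ne: assumes ij: "i \<noteq> j" and k: "\<not> (k + LL + 1 \<le> n)"
  shows "rhs_coeff n E Leak i j k = mconst 0"
proof -
  have "degree (det (colrep (char_poly_matrix AA) (i-1) (j-1))) < k"
  proof -
    have "card VV \<le> card {1..n}" by (rule card_mono[OF _ VV_box]) simp
    then have "LL + 1 \<le> n" using card_VV by simp
    then show ?thesis using rhs_deg[OF ij] k by linarith
  qed
  then have "coeff (det (colrep (char_poly_matrix AA) (i-1) (j-1))) k = 0" by (rule coeff_eq_0)
  then show ?thesis unfolding rhs_expand by (simp add: mconst_def)
qed

lemma cpm_gen: "B \<in> carrier_mat m m \<Longrightarrow> r < m \<Longrightarrow> c < m \<Longrightarrow>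
  char_poly_matrix B $$ (r,c) = (if r = c then [:0,1:] else 0) + [: - B $$ (r,c) :]"
  unfolding char_poly_matrix_def by simp

lemma rhs_const_eq: assumes ij: "i = j" and n: "0 < n"
  shows "rhs_coeff n E Leak i j (n-1) = mconst 1"
proof -
  define a where "a = i - 1"
  let ?M = "char_poly_matrix AA"
  define B where "B = mat_delete AA a a"
  have B: "B \<in> carrier_mat (n-1) (n-1)" unfolding B_def by (rule mat_delete_carrier) simp
  have eq: "mat_delete ?M a a = char_poly_matrix B"
  proof (rule eq_matI)
    have Mc: "?M \<in> carrier_mat n n" by simp
    have Bc: "char_poly_matrix B \<in> carrier_mat (n-1) (n-1)" using B by simp
    show "dim_row (mat_delete ?M a a) = dim_row (char_poly_matrix B)"
      using carrier_matD[OF Mc] carrier_matD[OF Bc] by simp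
    show "dim_col (mat_delete ?M a a) = dim_col (char_poly_matrix B)"
      using carrier_matD[OF Mc] carrier_matD[OF Bc] by simp
    fix r c assume r: "r < dim_row (char_poly_matrix B)" and c: "c < dim_col (char_poly_matrix B)"
    then have r': "r < n - 1" and c': "c < n - 1" using carrier_matD[OF Bc] by auto
    define r2 where "r2 = (if r < a then r else Suc r)"
    define c2 where "c2 = (if c < a then c else Suc c)"
    have r2n: "r2 < n" and c2n: "c2 < n" using r' c' unfolding r2_def c2_def by auto
    have rc: "r2 = c2 \<longleftrightarrow> r = c" unfolding r2_def c2_def by auto
    have "mat_delete ?M a a $$ (r,c) = ?M $$ (r2, c2)"
      unfolding mat_delete_def r2_def c2_def using r' c' carrier_matD[OF Mc] by simp
    also have "\<dots> = (if r2 = c2 then [:0,1:] else 0) + [: - AA $$ (r2,c2) :]" by (rule cpm_index[OF r2n c2n])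
    also have "AA $$ (r2, c2) = B $$ (r, c)"
      unfolding B_def mat_delete_def r2_def c2_def using r' c' carrier_matD[OF A_carrier] by simp
    also have "(if r2 = c2 then [:0,1:] else 0) + [: - B $$ (r,c) :] = char_poly_matrix B $$ (r,c)"
      using cpm_gen[OF B r' c'] rc by simp
    finally show "mat_delete ?M a a $$ (r,c) = char_poly_matrix B $$ (r,c)" .
  qed
  have "rhs_coeff n E Leak i j (n-1) = coeff (det (mat_delete ?M a a)) (n-1)"
    unfolding rhs_coeff_def a_def using ij by simp
  also have "\<dots> = coeff (char_poly B) (n-1)" unfolding eq char_poly_def ..
  also have "\<dots> = 1" using degree_monic_char_poly[OF B] by simp
  finally show ?thesis by (simp add: mconst_def)
qed

end


theorem corollary3p2:
  fixes n i j :: nat and E :: "(nat \<times> nat) set" and Leak :: "nat set"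
  assumes "E \<subseteq> {1..n} \<times> {1..n}"
    and "\<forall>k. (k, k) \<notin> E"
    and "Leak \<subseteq> {1..n}"
    and "i \<in> {1..n}" and "j \<in> {1..n}"
    and "strongly_connected n E"
  shows "(\<forall>k<n. \<not> is_constant_mpoly (lhs_coeff n E Leak k) \<longleftrightarrow> (Leak \<noteq> {} \<or> 1 \<le> k))
       \<and> (\<forall>k<n. \<not> is_constant_mpoly (rhs_coeff n E Leak i j k) \<longleftrightarrow>
              (if i = j then k + 2 \<le> n else k + dist_path E j i + 1 \<le> n))"
proof -
  interpret cmij n E Leak i j
    by (unfold_locales) (use assms in auto)
  have L: "\<not> is_constant_mpoly (lhs_coeff n E Leak k) \<longleftrightarrow> (Leak \<noteq> {} \<or> 1 \<le> k)" if k: "k < n" for k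
  proof
    assume nc: "\<not> is_constant_mpoly (lhs_coeff n E Leak k)"
    show "Leak \<noteq> {} \<or> 1 \<le> k"
    proof (rule ccontr)
      assume "\<not> (Leak \<noteq> {} \<or> 1 \<le> k)"
      then have L0: "Leak = {}" and k0: "k = 0" by auto
      have "lhs_coeff n E Leak k = mconst 0"
        using lhs_const[OF L0] k k0 by (simp add: mconst_def)
      then show False using nc unfolding is_constant_mpoly_def by blast
    qed
  next
    assume "Leak \<noteq> {} \<or> 1 \<le> k"
    then show "\<not> is_constant_mpoly (lhs_coeff n E Leak k)" by (rule lhs_nonconst[OF k])
  qed
  have R: "\<not> is_constant_mpoly (rhs_coeff n E Leak i j k) \<longleftrightarrow>
      (if i = j then k + 2 \<le> n else k + dist_path E j i + 1 \<le> n)" if k: "k < n" for k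
  proof
    assume nc: "\<not> is_constant_mpoly (rhs_coeff n E Leak i j k)"
    show "if i = j then k + 2 \<le> n else k + dist_path E j i + 1 \<le> n"
    proof (rule ccontr)
      assume ncond: "\<not> (if i = j then k + 2 \<le> n else k + dist_path E j i + 1 \<le> n)"
      have "\<exists>c. rhs_coeff n E Leak i j k = mconst c"
      proof (cases "i = j")
        case True
        then have "k = n - 1" using ncond k by auto
        then show ?thesis using rhs_const_eq[OF True] k by auto
      next
        case False
        then show ?thesis using rhs_const_ne[OF False] ncond by auto
      qed
      then show False using nc unfolding is_constant_mpoly_def by blast
    qed
  next
    assume "if i = j then k + 2 \<le> n else k + dist_path E j i + 1 \<le> n"
    then show "\<not> is_constant_mpoly (rhs_coeff n E Leak i j k)" by (rule rhs_nonconst[OF k])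
  qed
  show ?thesis using L R by blast
qed

end
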